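(* There exist $d\ge1$, a partition of $\{1,\dots,d\}$ into sets $\mathcal{D},\mathcal{U}$, a causal graph with contribution matrix $\mathbb{C}$, cost weights $c\in\mathbb{R}^d$ with $c_f>0$, an exponent $p\ge1$, a deficit $\alpha>0$ and $\beta\in(0,1)$ such that the set $$\mathcal{H}=\{h_0\in\mathbb{R}^d:\ \mathbb{C}h_0\ge0\ \text{and every optimal solution of } \min_{e\ge0}\Big(\sum_f c_fe_f^{\,p}\Big)^{1/p}\ \text{s.t.}\ (\mathbb{C}h_0)^\top e\ge\alpha\ \text{is }\beta\text{-desirable}\}$$ of $\beta$-desirable classifiers is not convex.
   Context: A causal graph is a weighted directed acyclic graph on $\{1,\dots,d\}$ with adjacency matrix $A$ ($A_{ij}$ the weight of edge $i\to j$, $0$ if absent); its contribution matrix is $\mathbb{C}=\sum_{k=0}^{d}A^k$. $\mathcal{D}$ is the set of desirable features and $\mathcal{U}$ the set of undesirable features. An effort profile $e$ is $\beta$-desirable if $\|e_{\mathcal{D}}\|_2\ge\beta\|e\|_2$, where $e_{\mathcal{D}}$ is the restriction of $e$ to coordinates in $\mathcal{D}$. *)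

theory Defs
  imports Complex_Main
begin

text \<open>Coordinates are indexed by 0..d-1 (the paper's 1..d shifted by one).
  Vectors in R^d are functions nat => real, d x d matrices are nat => nat => real;
  only entries with indices < d are relevant.\<close>

definition mat_mul :: "nat \<Rightarrow> (nat \<Rightarrow> nat \<Rightarrow> real) \<Rightarrow> (nat \<Rightarrow> nat \<Rightarrow> real) \<Rightarrow> nat \<Rightarrow> nat \<Rightarrow> real" where
  "mat_mul d X Y = (\<lambda>i j. \<Sum>k<d. X i k * Y k j)"

fun mat_pow :: "nat \<Rightarrow> (nat \<Rightarrow> nat \<Rightarrow> real) \<Rightarrow> nat \<Rightarrow> nat \<Rightarrow> nat \<Rightarrow> real" where
  "mat_pow d A 0 = (\<lambda>i j. if i = j then 1 else 0)"
| "mat_pow d A (Suc n) = mat_mul d (mat_pow d A n) A"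

definition mat_vec :: "nat \<Rightarrow> (nat \<Rightarrow> nat \<Rightarrow> real) \<Rightarrow> (nat \<Rightarrow> real) \<Rightarrow> nat \<Rightarrow> real" where
  "mat_vec d M v = (\<lambda>i. \<Sum>j<d. M i j * v j)"

definition edges :: "nat \<Rightarrow> (nat \<Rightarrow> nat \<Rightarrow> real) \<Rightarrow> (nat \<times> nat) set" where
  "edges d A = {(i, j). i < d \<and> j < d \<and> A i j \<noteq> 0}"

definition causal_graph :: "nat \<Rightarrow> (nat \<Rightarrow> nat \<Rightarrow> real) \<Rightarrow> bool" where
  "causal_graph d A \<longleftrightarrow> acyclic (edges d A) \<and> (\<forall>i j. (i \<ge> d \<or> j \<ge> d) \<longrightarrow> A i j = 0)"

definition contribution :: "nat \<Rightarrow> (nat \<Rightarrow> nat \<Rightarrow> real) \<Rightarrow> nat \<Rightarrow> nat \<Rightarrow> real" where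
  "contribution d A = (\<lambda>i j. \<Sum>k\<in>{0..d}. mat_pow d A k i j)"

definition beta_desirable :: "nat \<Rightarrow> nat set \<Rightarrow> real \<Rightarrow> (nat \<Rightarrow> real) \<Rightarrow> bool" where
  "beta_desirable d D \<beta> e \<longleftrightarrow>
     sqrt (\<Sum>i\<in>D. (e i)\<^sup>2) \<ge> \<beta> * sqrt (\<Sum>i<d. (e i)\<^sup>2)"

definition cost :: "nat \<Rightarrow> (nat \<Rightarrow> real) \<Rightarrow> real \<Rightarrow> (nat \<Rightarrow> real) \<Rightarrow> real" where
  "cost d c p e = (\<Sum>f<d. c f * (e f) powr p) powr (1 / p)"

definition feasible :: "nat \<Rightarrow> (nat \<Rightarrow> nat \<Rightarrow> real) \<Rightarrow> real \<Rightarrow> (nat \<Rightarrow> real) \<Rightarrow> (nat \<Rightarrow> real) \<Rightarrow> bool" where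
  "feasible d C \<alpha> h0 e \<longleftrightarrow>
     (\<forall>i<d. e i \<ge> 0) \<and> (\<Sum>i<d. mat_vec d C h0 i * e i) \<ge> \<alpha>"

definition optimal :: "nat \<Rightarrow> (nat \<Rightarrow> nat \<Rightarrow> real) \<Rightarrow> (nat \<Rightarrow> real) \<Rightarrow> real \<Rightarrow> real \<Rightarrow> (nat \<Rightarrow> real) \<Rightarrow> (nat \<Rightarrow> real) \<Rightarrow> bool" where
  "optimal d C c p \<alpha> h0 e \<longleftrightarrow>
     feasible d C \<alpha> h0 e \<and> (\<forall>e'. feasible d C \<alpha> h0 e' \<longrightarrow> cost d c p e \<le> cost d c p e')"

definition desirable_classifiers ::
  "nat \<Rightarrow> nat set \<Rightarrow> (nat \<Rightarrow> nat \<Rightarrow> real) \<Rightarrow> (nat \<Rightarrow> real) \<Rightarrow> real \<Rightarrow> real \<Rightarrow> real \<Rightarrow> (nat \<Rightarrow> real) set" where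
  "desirable_classifiers d D C c p \<alpha> \<beta> =
     {h0. (\<forall>i\<ge>d. h0 i = 0) \<and> (\<forall>i<d. mat_vec d C h0 i \<ge> 0) \<and>
          (\<forall>e. optimal d C c p \<alpha> h0 e \<longrightarrow> beta_desirable d D \<beta> e)}"

end

theory Submission
  imports Defs
begin

definition Z :: "nat \<Rightarrow> nat \<Rightarrow> real" where "Z = (\<lambda>_ _. 0)"

lemma pow_Z: "mat_pow d Z (Suc n) = Z"
  by (simp add: mat_mul_def Z_def)

lemma contrib_Z: "contribution d Z i j = (if i = j then 1 else 0)"
proof -
  have "{0..d} = insert 0 {Suc 0..d}" by auto
  moreover have "\<forall>k\<in>{Suc 0..d}. mat_pow d Z k i j = 0"
  proof
    fix k assume "k \<in> {Suc 0..d}"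
    then obtain n where "k = Suc n" by (cases k) auto
    then show "mat_pow d Z k i j = 0" by (simp only: pow_Z) (simp add: Z_def)
  qed
  ultimately show ?thesis unfolding contribution_def by simp
qed

lemma vec_Z: "i < 3 \<Longrightarrow> mat_vec 3 (contribution 3 Z) h i = h i"
  by (auto simp: mat_vec_def contrib_Z numeral_3_eq_3 lessThan_Suc less_Suc_eq)

lemma feas: "feasible 3 (contribution 3 Z) 1 h e \<longleftrightarrow>
   e 0 \<ge> 0 \<and> e 1 \<ge> 0 \<and> e 2 \<ge> 0 \<and> h 0 * e 0 + h 1 * e 1 + h 2 * e 2 \<ge> 1"
proof -
  have s: "(\<Sum>i<3. mat_vec 3 (contribution 3 Z) h i * e i) = (\<Sum>i<3. h i * e i)"
    by (rule sum.cong) (auto simp: vec_Z)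
  show ?thesis unfolding feasible_def s
    by (auto simp: numeral_3_eq_3 lessThan_Suc less_Suc_eq numeral_2_eq_2)
qed

lemma costf: "e 0 \<ge> 0 \<Longrightarrow> e 1 \<ge> 0 \<Longrightarrow> e 2 \<ge> 0 \<Longrightarrow>
   cost 3 (\<lambda>_. 1) 1 e = e 0 + e 1 + e 2"
  by (simp add: cost_def numeral_3_eq_3 lessThan_Suc numeral_2_eq_2)

lemma bd: "beta_desirable 3 {0,1} \<beta> e \<longleftrightarrow>
   sqrt ((e 0)\<^sup>2 + (e 1)\<^sup>2) \<ge> \<beta> * sqrt ((e 0)\<^sup>2 + (e 1)\<^sup>2 + (e 2)\<^sup>2)"
  by (simp add: beta_desirable_def numeral_3_eq_3 lessThan_Suc numeral_2_eq_2 add.commute add.left_commute)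

lemma mem: "h \<in> desirable_classifiers 3 {0,1} (contribution 3 Z) (\<lambda>_. 1) 1 1 \<beta> \<longleftrightarrow>
  (\<forall>i\<ge>3. h i = 0) \<and> (\<forall>i<3. h i \<ge> 0) \<and>
  (\<forall>e. optimal 3 (contribution 3 Z) (\<lambda>_. 1) 1 1 h e \<longrightarrow> beta_desirable 3 {0,1} \<beta> e)"
  by (simp add: desirable_classifiers_def vec_Z)

lemma opt: "optimal 3 (contribution 3 Z) (\<lambda>_. 1) 1 1 h e \<longleftrightarrow>
   feasible 3 (contribution 3 Z) 1 h e \<and>
   (\<forall>e'. feasible 3 (contribution 3 Z) 1 h e' \<longrightarrow> e 0 + e 1 + e 2 \<le> e' 0 + e' 1 + e' 2)"
  unfolding optimal_def by (auto simp: feas costf)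

theorem lemma3:
  shows "\<exists>d::nat. \<exists>D U :: nat set. \<exists>A :: nat \<Rightarrow> nat \<Rightarrow> real. \<exists>c :: nat \<Rightarrow> real.
     \<exists>p \<alpha> \<beta> :: real.
       d \<ge> 1 \<and> D \<union> U = {..<d} \<and> D \<inter> U = {} \<and> D \<noteq> {} \<and> U \<noteq> {} \<and>
       causal_graph d A \<and> (\<forall>f<d. c f > 0) \<and> p \<ge> 1 \<and> \<alpha> > 0 \<and> 0 < \<beta> \<and> \<beta> < 1 \<and>
       (\<exists>h1 \<in> desirable_classifiers d D (contribution d A) c p \<alpha> \<beta>.
        \<exists>h2 \<in> desirable_classifiers d D (contribution d A) c p \<alpha> \<beta>.
        \<exists>t::real. 0 \<le> t \<and> t \<le> 1 \<and>
          (\<lambda>i. (1 - t) * h1 i + t * h2 i) \<notin> desirable_classifiers d D (contribution d A) c p \<alpha> \<beta>)"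
proof -
  define h1 :: "nat \<Rightarrow> real" where "h1 = (\<lambda>i. if i = 0 then 1 else if i = 2 then 1/2 else 0)"
  define h2 :: "nat \<Rightarrow> real" where "h2 = (\<lambda>i. if i = 1 then 1 else if i = 2 then 1/2 else 0)"
  have un: "{0,1} \<union> {2} = {..<3::nat}" by (auto simp: numeral_3_eq_3 numeral_2_eq_2 less_Suc_eq)
  have cg: "causal_graph 3 Z"
    by (simp add: causal_graph_def edges_def Z_def acyclic_def)
  have m1: "h1 \<in> desirable_classifiers 3 {0,1} (contribution 3 Z) (\<lambda>_. 1) 1 1 (1/2)"
  proof -
    have "beta_desirable 3 {0,1} (1/2) e" if o: "optimal 3 (contribution 3 Z) (\<lambda>_. 1) 1 1 h1 e" for e
    proof -
      have f: "e 0 \<ge> 0" "e 1 \<ge> 0" "e 2 \<ge> 0" "e 0 + e 2 / 2 \<ge> 1"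
        using o by (auto simp: opt feas h1_def)
      have "feasible 3 (contribution 3 Z) 1 h1 (\<lambda>i. if i = 0 then 1 else 0)"
        by (simp add: feas h1_def)
      then have "e 0 + e 1 + e 2 \<le> 1" using o unfolding opt by fastforce
      then have "e 1 = 0" "e 2 = 0" using f by auto
      then show ?thesis unfolding bd by simp
    qed
    then show ?thesis unfolding mem by (auto simp: h1_def)
  qed
  have m2: "h2 \<in> desirable_classifiers 3 {0,1} (contribution 3 Z) (\<lambda>_. 1) 1 1 (1/2)"
  proof -
    have "beta_desirable 3 {0,1} (1/2) e" if o: "optimal 3 (contribution 3 Z) (\<lambda>_. 1) 1 1 h2 e" for e
    proof -
      have f: "e 0 \<ge> 0" "e 1 \<ge> 0" "e 2 \<ge> 0" "e 1 + e 2 / 2 \<ge> 1"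
        using o by (auto simp: opt feas h2_def)
      have "feasible 3 (contribution 3 Z) 1 h2 (\<lambda>i. if i = 1 then 1 else 0)"
        by (simp add: feas h2_def)
      then have "e 0 + e 1 + e 2 \<le> 1" using o unfolding opt by fastforce
      then have "e 0 = 0" "e 2 = 0" using f by auto
      then show ?thesis unfolding bd by simp
    qed
    then show ?thesis unfolding mem by (auto simp: h2_def)
  qed
  have nm: "(\<lambda>i. (1 - 1/2) * h1 i + 1/2 * h2 i) \<notin> desirable_classifiers 3 {0,1} (contribution 3 Z) (\<lambda>_. 1) 1 1 (1/2)"
  proof
    let ?h = "(\<lambda>i. (1 - 1/2) * h1 i + 1/2 * h2 i) :: nat \<Rightarrow> real"
    let ?e = "(\<lambda>i. if i = 2 then 2 else 0) :: nat \<Rightarrow> real"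
    assume "?h \<in> desirable_classifiers 3 {0,1} (contribution 3 Z) (\<lambda>_. 1) 1 1 (1/2)"
    moreover have "optimal 3 (contribution 3 Z) (\<lambda>_. 1) 1 1 ?h ?e"
      unfolding opt by (auto simp: feas h1_def h2_def)
    ultimately have "beta_desirable 3 {0,1} (1/2) ?e" unfolding mem by blast
    then show False unfolding bd by simp
  qed
  have fin: "\<exists>h1 \<in> desirable_classifiers 3 {0,1} (contribution 3 Z) (\<lambda>_. 1) 1 1 (1/2).
        \<exists>h2 \<in> desirable_classifiers 3 {0,1} (contribution 3 Z) (\<lambda>_. 1) 1 1 (1/2).
        \<exists>t::real. 0 \<le> t \<and> t \<le> 1 \<and>
          (\<lambda>i. (1 - t) * h1 i + t * h2 i) \<notin> desirable_classifiers 3 {0,1} (contribution 3 Z) (\<lambda>_. 1) 1 1 (1/2)"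
    apply (rule bexI[OF _ m1], rule bexI[OF _ m2], rule exI[where x="1/2::real"])
    apply (intro conjI, simp, simp, rule nm)
    done
  show ?thesis
    apply (rule exI[where x="3::nat"], rule exI[where x="{0,1}::nat set"], rule exI[where x="{2}::nat set"],
       rule exI[where x=Z], rule exI[where x="\<lambda>_::nat. 1::real"], rule exI[where x="1::real"],
       rule exI[where x="1::real"], rule exI[where x="1/2::real"])
    apply (intro conjI; (rule un cg fin | simp))
    done
qed

end
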